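(* Let $N$ be a natural number, $P=\{a\subseteq N: |a|\geq 2\}$, and let $\|\cdot\|_3$ be the graph coloring norm on subsets of $P$ (defined in the context). Let $n$ be a natural number and $A\subseteq P$. If $A$ cannot be split by $2^n$ sets, then $\|A\|_3>n$.
   Context: $N=\{0,\ldots,N-1\}$. For $A\subseteq P$ and $z\subseteq N$ let $A\restriction z=\{a\in A: a\subseteq z\}$. The relation "$\|A\|_3\geq m$" is defined recursively: $\|A\|_3\geq 0$ always; $\|A\|_3\geq 1$ iff $A\neq\emptyset$; for $m\geq 1$, $\|A\|_3\geq m+1$ iff for every $z\subseteq N$ either $\|A\restriction z\|_3\geq m$ or $\|A\restriction(N\setminus z)\|_3\geq m$. Then $\|A\|_3$ is the largest $m$ with $\|A\|_3\geq m$. $A$ is split by sets $V_0,\ldots,V_{c-1}$ (pairwise disjoint, possibly empty, with union $N$) if $A\restriction V_j=\emptyset$ for every $j<c$; $A$ can be split by $c$ sets if such a partition of $N$ into $c$ sets exists. *)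

theory Defs
  imports Main
begin

definition P :: "nat \<Rightarrow> nat set set" where
  "P N = {a. a \<subseteq> {..<N} \<and> card a \<ge> 2}"

definition restr :: "nat set set \<Rightarrow> nat set \<Rightarrow> nat set set" where
  "restr A z = {a \<in> A. a \<subseteq> z}"

fun norm3_ge :: "nat \<Rightarrow> nat set set \<Rightarrow> nat \<Rightarrow> bool" where
  "norm3_ge N A 0 = True"
| "norm3_ge N A (Suc 0) = (A \<noteq> {})"
| "norm3_ge N A (Suc (Suc m)) =
     (\<forall>z. z \<subseteq> {..<N} \<longrightarrow>
        norm3_ge N (restr A z) (Suc m) \<or> norm3_ge N (restr A ({..<N} - z)) (Suc m))"

definition norm3 :: "nat \<Rightarrow> nat set set \<Rightarrow> nat" where
  "norm3 N A = (GREATEST m. norm3_ge N A m)"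

definition can_split :: "nat \<Rightarrow> nat set set \<Rightarrow> nat \<Rightarrow> bool" where
  "can_split N A c = (\<exists>V :: nat \<Rightarrow> nat set.
      (\<forall>i<c. \<forall>j<c. i \<noteq> j \<longrightarrow> V i \<inter> V j = {}) \<and>
      (\<Union>j<c. V j) = {..<N} \<and>
      (\<forall>j<c. restr A (V j) = {}))"

end

theory Submission
  imports Defs
begin

lemma restr_restr: "restr (restr A z) w = restr A (w \<inter> z)"
  unfolding restr_def by auto

lemma split_combine:
  assumes z: "z \<subseteq> {..<N}"
    and s1: "can_split N (restr A z) c" and s2: "can_split N (restr A ({..<N} - z)) c"
  shows "can_split N A (2 * c)"
proof -
  obtain V where V: "(\<forall>i<c. \<forall>j<c. i \<noteq> j \<longrightarrow> V i \<inter> V j = {}) \<and>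
      (\<Union>j<c. V j) = {..<N} \<and> (\<forall>j<c. restr (restr A z) (V j) = {})"
    using s1 unfolding can_split_def by (elim exE) (rule that)
  obtain W where W: "(\<forall>i<c. \<forall>j<c. i \<noteq> j \<longrightarrow> W i \<inter> W j = {}) \<and>
      (\<Union>j<c. W j) = {..<N} \<and> (\<forall>j<c. restr (restr A ({..<N} - z)) (W j) = {})"
    using s2 unfolding can_split_def by (elim exE) (rule that)
  have V1: "\<forall>i<c. \<forall>j<c. i \<noteq> j \<longrightarrow> V i \<inter> V j = {}" using V by (rule conjunct1)
  have V2: "(\<Union>j<c. V j) = {..<N}" using V by (rule conjunct1[OF conjunct2])
  have V3: "\<forall>j<c. restr (restr A z) (V j) = {}" using V by (rule conjunct2[OF conjunct2])
  have W1: "\<forall>i<c. \<forall>j<c. i \<noteq> j \<longrightarrow> W i \<inter> W j = {}" using W by (rule conjunct1)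
  have W2: "(\<Union>j<c. W j) = {..<N}" using W by (rule conjunct1[OF conjunct2])
  have W3: "\<forall>j<c. restr (restr A ({..<N} - z)) (W j) = {}" using W by (rule conjunct2[OF conjunct2])
  define U where "U i = (if i < c then V i \<inter> z else W (i - c) \<inter> ({..<N} - z))" for i
  have "\<forall>i<2*c. \<forall>j<2*c. i \<noteq> j \<longrightarrow> U i \<inter> U j = {}"
  proof (intro allI impI)
    fix i j assume "i < 2*c" "j < 2*c" "i \<noteq> j"
    show "U i \<inter> U j = {}"
    proof (cases "i < c"; cases "j < c")
      assume a: "i < c" "j < c"
      then have "V i \<inter> V j = {}" using V1 \<open>i \<noteq> j\<close> by blast
      then show ?thesis using a by (simp add: U_def) blast
    next
      assume a: "i < c" "\<not> j < c"
      have "U i \<subseteq> z" using a(1) by (simp add: U_def)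
      moreover have "U j \<inter> z = {}" using a(2) by (simp add: U_def) blast
      ultimately show ?thesis by blast
    next
      assume a: "\<not> i < c" "j < c"
      have "U j \<subseteq> z" using a(2) by (simp add: U_def)
      moreover have "U i \<inter> z = {}" using a(1) by (simp add: U_def) blast
      ultimately show ?thesis by blast
    next
      assume a: "\<not> i < c" "\<not> j < c"
      then have "i - c < c" "j - c < c" "i - c \<noteq> j - c" using \<open>i < 2*c\<close> \<open>j < 2*c\<close> \<open>i \<noteq> j\<close> by auto
      then have "W (i - c) \<inter> W (j - c) = {}" using W1 by blast
      then show ?thesis using a by (simp add: U_def) blast
    qed
  qed
  moreover have "(\<Union>j<2*c. U j) = {..<N}"
  proof (rule equalityI)
    show "(\<Union>j<2*c. U j) \<subseteq> {..<N}"
    proof (rule subsetI)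
      fix x assume "x \<in> (\<Union>j<2*c. U j)"
      then obtain j where j: "j < 2*c" "x \<in> U j" by blast
      show "x \<in> {..<N}"
      proof (cases "j < c")
        case True
        then have "x \<in> z" using j(2) unfolding U_def by simp
        then show ?thesis using z by blast
      next
        case False
        then show ?thesis using j(2) unfolding U_def by simp
      qed
    qed
  next
    show "{..<N} \<subseteq> (\<Union>j<2*c. U j)"
    proof (rule subsetI)
      fix x assume x: "x \<in> {..<N}"
      show "x \<in> (\<Union>j<2*c. U j)"
      proof (cases "x \<in> z")
        case True
        have "x \<in> (\<Union>j<c. V j)" using V2 x by simp
        then obtain j where "j < c" "x \<in> V j" by blast
        then have "x \<in> U j" "j < 2*c" using True unfolding U_def by simp_all
        then show ?thesis by blast
      next
        case False
        have "x \<in> (\<Union>j<c. W j)" using W2 x by simp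
        then obtain j where j: "j < c" "x \<in> W j" by blast
        then have "U (c + j) = W j \<inter> ({..<N} - z)" unfolding U_def by simp
        then have "x \<in> U (c+j)" "c + j < 2*c" using False x j by simp_all
        then show ?thesis by blast
      qed
    qed
  qed
  moreover have "\<forall>j<2*c. restr A (U j) = {}"
  proof (intro allI impI)
    fix j assume j: "j < 2*c"
    show "restr A (U j) = {}"
    proof (cases "j < c")
      case True
      then have "restr (restr A z) (V j) = {}" using V3 by blast
      then show ?thesis using True unfolding U_def by (simp add: restr_restr)
    next
      case False
      then have "j - c < c" using j by simp
      then have "restr (restr A ({..<N} - z)) (W (j - c)) = {}" using W3 by blast
      then show ?thesis using False unfolding U_def by (simp add: restr_restr)
    qed
  qed
  ultimately show ?thesis unfolding can_split_def by (intro exI[of _ U]) simp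
qed

lemma main_ge: "\<not> can_split N A (2 ^ n) \<Longrightarrow> norm3_ge N A (Suc n)"
proof (induction n arbitrary: A)
  case 0
  have "A \<noteq> {}"
  proof
    assume "A = {}"
    then have "can_split N A 1" unfolding can_split_def restr_def
      by (intro exI[of _ "\<lambda>_. {..<N}"]) auto
    then show False using 0 by simp
  qed
  then show ?case by simp
next
  case (Suc k)
  show ?case
  proof (simp only: norm3_ge.simps, intro allI impI)
    fix z assume z: "z \<subseteq> {..<N}"
    show "norm3_ge N (restr A z) (Suc k) \<or> norm3_ge N (restr A ({..<N} - z)) (Suc k)"
      using Suc.IH split_combine[OF z, of A "2^k"] Suc.prems by auto
  qed
qed

lemma ge_nonempty: "norm3_ge N B (Suc k) \<Longrightarrow> B \<noteq> {}"
proof (induction k arbitrary: B)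
  case 0 then show ?case by simp
next
  case (Suc k)
  then have "\<forall>z\<subseteq>{..<N}. norm3_ge N (restr B z) (Suc k) \<or> norm3_ge N (restr B ({..<N} - z)) (Suc k)"
    by simp
  then have "norm3_ge N (restr B {}) (Suc k) \<or> norm3_ge N (restr B ({..<N} - {})) (Suc k)"
    by blast
  then show ?case using Suc.IH unfolding restr_def by blast
qed

lemma ge_bound: "B \<subseteq> P N \<Longrightarrow> norm3_ge N B (Suc m) \<Longrightarrow> m \<le> card (\<Union>B)"
proof (induction m arbitrary: B)
  case 0 then show ?case by simp
next
  case (Suc m)
  have sub: "\<Union>B \<subseteq> {..<N}" using Suc.prems(1) unfolding P_def by auto
  have fin: "finite (\<Union>B)" using sub finite_subset by blast
  have "B \<noteq> {}" using ge_nonempty Suc.prems(2) by blast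
  then obtain b where b: "b \<in> B" by blast
  then have "card b \<ge> 2" using Suc.prems(1) unfolding P_def by auto
  then have "b \<noteq> {}" by auto
  then obtain x where x: "x \<in> \<Union>B" using b by blast
  define z where "z = \<Union>B - {x}"
  have zs: "z \<subseteq> {..<N}" using sub z_def by auto
  have "restr B ({..<N} - z) = {}"
  proof (rule ccontr)
    assume "restr B ({..<N} - z) \<noteq> {}"
    then obtain a where a: "a \<in> B" "a \<subseteq> {..<N} - z" unfolding restr_def by auto
    then have "a \<subseteq> {x}" unfolding z_def by auto
    then have "card a \<le> 1" using card_mono[of "{x}" a] by simp
    moreover have "card a \<ge> 2" using a Suc.prems(1) unfolding P_def by auto
    ultimately show False by simp
  qed
  then have "\<not> norm3_ge N (restr B ({..<N} - z)) (Suc m)" using ge_nonempty by blast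
  moreover have "\<forall>z\<subseteq>{..<N}. norm3_ge N (restr B z) (Suc m) \<or> norm3_ge N (restr B ({..<N} - z)) (Suc m)"
    using Suc.prems(2) by simp
  ultimately have g: "norm3_ge N (restr B z) (Suc m)" using zs by blast
  have "restr B z \<subseteq> P N" using Suc.prems(1) unfolding restr_def by auto
  then have "m \<le> card (\<Union>(restr B z))" using Suc.IH g by blast
  also have "\<dots> \<le> card z" using fin unfolding z_def restr_def by (intro card_mono) auto
  also have "\<dots> < card (\<Union>B)" using fin x unfolding z_def by (rule card_Diff1_less)
  finally show ?case by simp
qed

theorem theorem5p11:
  fixes N n :: nat and A :: "nat set set"
  assumes "A \<subseteq> P N"
    and "\<not> can_split N A (2 ^ n)"
  shows "norm3 N A > n"
proof -
  have g: "norm3_ge N A (Suc n)" using main_ge assms(2) by blast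
  have b: "\<forall>y. norm3_ge N A y \<longrightarrow> y \<le> Suc N"
  proof (intro allI impI)
    fix y assume h: "norm3_ge N A y"
    show "y \<le> Suc N"
    proof (cases y)
      case 0 then show ?thesis by simp
    next
      case (Suc m)
      have sub: "\<Union>A \<subseteq> {..<N}" using assms(1) unfolding P_def by auto
      then have "card (\<Union>A) \<le> N" by (metis card_lessThan card_mono finite_lessThan)
      then show ?thesis using ge_bound[OF assms(1)] h Suc by fastforce
    qed
  qed
  have "Suc n \<le> norm3 N A" unfolding norm3_def using Greatest_le_nat[of "norm3_ge N A" "Suc n" "Suc N"] g b by blast
  then show ?thesis by simp
qed

end
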